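(* Let $k>0$, $M>0$, $\beta\in\,]0,\tfrac12[$, $0<\sigma_0\le\min\{1,\frac{3\beta^3}{4\pi M^2}\}$, and let $P_0=\max\{10,(\frac{1+M}{4\pi})^{4/3},\frac{64(k+1)^2}{1-2\beta},\frac{256(k+1)^2M^4}{(1-2\beta)^2}\}$. Let $(f_n)\subset\mathcal A$ be a sequence with $\lim_{n\to\infty}\mathcal D(f_n)=\inf_{f\in\mathcal A}\mathcal D(f)$, such that $0\le f_n\le1$ for all $n$, such that $$\int_{\mathbb R^3}\int_{|v|\ge P+1}\sqrt{1+|v|^2}\,f_n\,dx\,dv\le\frac{2}{P^{1/4}}\quad\text{for all } n\in\mathbb N,\ P\ge P_0+1,$$ and such that $f_n\rightharpoonup f_0$ weakly in $L^{1+1/k}(\mathbb R^3\times\mathbb R^3)$. Then: (i) $0\le f_0\le1$; (ii) $f_0$ is spherically symmetric; (iii) $\int_{\mathbb R^3}\int_{|v|\ge P+1}\sqrt{1+|v|^2}f_0\,dx\,dv\le\frac{2}{P^{1/4}}$ for $P\ge P_0+1$; (iv) $m_{f_n}(r)\to m_{f_0}(r)$ as $n\to\infty$ for $r\in[0,\infty[$, in particular $m_{f_0}(r)/r\le\beta$ for $r\in\,]0,\infty[$; (v) $\rho_{f_0}(r)\le\sigma_0$ for $r\in[0,\infty[$; (vi) $\lambda_{f_n}(r)\to\lambda_{f_0}(r)$ as $n\to\infty$ for $r\in[0,\infty[$.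
   Context: Let $\chi(s)=\frac{k}{k+1}s^{1+1/k}$. A measurable $f\ge0$ on $\mathbb R^3\times\mathbb R^3$ is spherically symmetric if $f(Ax,Av)=f(x,v)$ for all $A\in SO(3)$. For such $f$: $\rho_f(x)=\int\sqrt{1+|v|^2}f(x,v)\,dv$ (radial, written $\rho_f(r)$), $m_f(r)=\int_{|x|\le r}\int\sqrt{1+|v|^2}f\,dx\,dv$, $\lambda_f$ given by $e^{-2\lambda_f(r)}=1-2m_f(r)/r$ (when $2m_f/r<1$), and $\mathcal D(f)=\int\int e^{\lambda_f(|x|)}(\chi(f)-f)\,dx\,dv$. $\mathcal A$ is the set of measurable spherically symmetric $f\ge0$ with $\int\int\sqrt{1+|v|^2}f\,dx\,dv=M$ and $\rho_f(r)\le\sigma_0$ for all $r\ge0$. *)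

theory Defs
  imports "HOL-Analysis.Analysis"
begin

type_synonym phase = "(real^3) \<times> (real^3)"

definition chi :: "real \<Rightarrow> real \<Rightarrow> real" where
  "chi k s = k / (k + 1) * s powr (1 + 1 / k)"

definition SO3 :: "(real^3^3) set" where
  "SO3 = {A. orthogonal_matrix A \<and> det A = 1}"

definition spherically_symmetric :: "(phase \<Rightarrow> real) \<Rightarrow> bool" where
  "spherically_symmetric f \<longleftrightarrow> (\<forall>A\<in>SO3. \<forall>x v. f (A *v x, A *v v) = f (x, v))"

definition rho :: "(phase \<Rightarrow> real) \<Rightarrow> real^3 \<Rightarrow> ennreal" where
  "rho f x = (\<integral>\<^sup>+ v. ennreal (sqrt (1 + (norm v)\<^sup>2) * f (x, v)) \<partial>lebesgue)"

definition mass_fn :: "(phase \<Rightarrow> real) \<Rightarrow> real \<Rightarrow> real" where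
  "mass_fn f r = enn2real (\<integral>\<^sup>+ z. ennreal (indicator {z. norm (fst z) \<le> r} z
        * sqrt (1 + (norm (snd z))\<^sup>2) * f z) \<partial>lebesgue)"

text \<open>\<open>\<lambda>_f\<close> defined by \<open>e^{-2\<lambda>_f(r)} = 1 - 2 m_f(r)/r\<close>; at \<open>r = 0\<close> the formula gives
  \<open>\<lambda>_f(0) = 0\<close> since \<open>x / 0 = 0\<close> in Isabelle.\<close>
definition lambda_fn :: "(phase \<Rightarrow> real) \<Rightarrow> real \<Rightarrow> real" where
  "lambda_fn f r = - ln (1 - 2 * mass_fn f r / r) / 2"

text \<open>\<open>\<D>(f) = \<integral>\<integral> e^{\<lambda>_f(|x|)} (\<chi>(f) - f)\<close>, computed in the extended reals as the difference
  of the two nonnegative integrals (the first may be \<open>+\<infinity>\<close>).\<close>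
definition Dfun :: "real \<Rightarrow> (phase \<Rightarrow> real) \<Rightarrow> ereal" where
  "Dfun k f =
     enn2ereal (\<integral>\<^sup>+ z. ennreal (exp (lambda_fn f (norm (fst z))) * chi k (f z)) \<partial>lebesgue)
   - enn2ereal (\<integral>\<^sup>+ z. ennreal (exp (lambda_fn f (norm (fst z))) * f z) \<partial>lebesgue)"

definition admissible :: "real \<Rightarrow> real \<Rightarrow> (phase \<Rightarrow> real) \<Rightarrow> bool" where
  "admissible M \<sigma>0 f \<longleftrightarrow>
     f \<in> borel_measurable lebesgue \<and> (\<forall>z. 0 \<le> f z) \<and> spherically_symmetric f \<and>
     (\<integral>\<^sup>+ z. ennreal (sqrt (1 + (norm (snd z))\<^sup>2) * f z) \<partial>lebesgue) = ennreal M \<and>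
     (\<forall>x. rho f x \<le> ennreal \<sigma>0)"

definition in_Lp :: "real \<Rightarrow> (phase \<Rightarrow> real) \<Rightarrow> bool" where
  "in_Lp p f \<longleftrightarrow> f \<in> borel_measurable lebesgue \<and> integrable lebesgue (\<lambda>z. \<bar>f z\<bar> powr p)"

definition weak_Lp_conv :: "real \<Rightarrow> (nat \<Rightarrow> phase \<Rightarrow> real) \<Rightarrow> (phase \<Rightarrow> real) \<Rightarrow> bool" where
  "weak_Lp_conv p fs f0 \<longleftrightarrow>
     (\<forall>n. in_Lp p (fs n)) \<and> in_Lp p f0 \<and>
     (\<forall>g. in_Lp (p / (p - 1)) g \<longrightarrow>
        (\<lambda>n. \<integral>z. fs n z * g z \<partial>lebesgue) \<longlonglongrightarrow> (\<integral>z. f0 z * g z \<partial>lebesgue))"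

end

theory Submission
  imports Defs
begin

definition bcs :: "(phase \<Rightarrow> real) \<Rightarrow> bool" where
  "bcs T \<longleftrightarrow> T \<in> borel_measurable lebesgue \<and> (\<exists>C. \<forall>z. \<bar>T z\<bar> \<le> C) \<and> (\<exists>R. \<forall>z. R < norm z \<longrightarrow> T z = 0)"

lemma int_bound_real:
  fixes f g :: "'a \<Rightarrow> real"
  assumes "integrable M f" "g \<in> borel_measurable M" "\<And>x. \<bar>g x\<bar> \<le> f x"
  shows "integrable M g"
proof (rule Bochner_Integration.integrable_bound[OF assms(1,2)])
  show "AE x in M. norm (g x) \<le> norm (f x)"
    using assms(3) by (intro AE_I2) (auto intro: order_trans[OF _ abs_ge_self])
qed

lemma integrable_cball_ind: "integrable lebesgue (indicator (cball (0::'a::euclidean_space) R) :: 'a \<Rightarrow> real)"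
  using lmeasurable_cball[of 0 R] by (intro integrable_real_indicator) (auto simp: fmeasurable_def)

lemma bcs_bound:
  assumes "bcs T" shows "\<exists>C R. C \<ge> 0 \<and> (\<forall>z. \<bar>T z\<bar> \<le> C * indicator (cball 0 R) z)"
proof -
  from assms obtain C R where C: "\<And>z. \<bar>T z\<bar> \<le> C" and R: "\<And>z. R < norm z \<Longrightarrow> T z = 0"
    unfolding bcs_def by blast
  have "C \<ge> 0" using C[of 0] by linarith
  moreover have "\<bar>T z\<bar> \<le> C * indicator (cball 0 R) z" for z
    using C[of z] R[of z] by (cases "norm z \<le> R") (auto simp: indicator_def)
  ultimately show ?thesis by blast
qed

lemma bcs_integrable: assumes "bcs T" shows "integrable lebesgue T"
proof -
  obtain C R where C: "C \<ge> 0" "\<And>z. \<bar>T z\<bar> \<le> C * indicator (cball 0 R) z" using bcs_bound[OF assms] by blast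
  have ib: "integrable lebesgue (\<lambda>z. C * indicator (cball 0 R) z)"
    using integrable_cball_ind[of R] by (rule integrable_mult_right)
  have mT: "T \<in> borel_measurable lebesgue" using assms unfolding bcs_def by blast
  show ?thesis by (rule int_bound_real[OF ib mT C(2)])
qed

lemma bcs_mult:
  assumes "bcs T" "h \<in> borel_measurable lebesgue" "\<And>z. \<bar>h z\<bar> \<le> B"
  shows "bcs (\<lambda>z. h z * T z)"
proof -
  from assms(1) obtain C R where C: "\<And>z. \<bar>T z\<bar> \<le> C" and R: "\<And>z. R < norm z \<Longrightarrow> T z = 0"
    and m: "T \<in> borel_measurable lebesgue"
    unfolding bcs_def by blast
  have "\<bar>h z * T z\<bar> \<le> B * C" for z
    using assms(3)[of z] C[of z] by (simp add: abs_mult mult_mono')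
  moreover have "\<forall>z. R < norm z \<longrightarrow> h z * T z = 0" using R by simp
  moreover have "(\<lambda>z. h z * T z) \<in> borel_measurable lebesgue" using m assms(2) by measurable
  ultimately show ?thesis unfolding bcs_def by blast
qed

lemma bcs_Lp:
  assumes "bcs T" "q \<ge> 1"
  shows "in_Lp q T"
proof -
  obtain C R where C: "C \<ge> 0" "\<And>z. \<bar>T z\<bar> \<le> C * indicator (cball 0 R) z" using bcs_bound[OF assms(1)] by blast
  have "\<bar>T z\<bar> powr q \<le> C powr q * indicator (cball 0 R) z" for z
  proof (cases "z \<in> cball 0 R")
    case True then show ?thesis using C(2)[of z] assms(2) by (auto intro: powr_mono2)
  next
    case False then show ?thesis using C(2)[of z] assms(2) by auto
  qed
  note bnd = this
  have ib: "integrable lebesgue (\<lambda>z. C powr q * indicator (cball 0 R) z)"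
    using integrable_cball_ind[of R] by (rule integrable_mult_right)
  have mT: "T \<in> borel_measurable lebesgue" using assms unfolding bcs_def by blast
  then have mT': "(\<lambda>z. \<bar>T z\<bar> powr q) \<in> borel_measurable lebesgue" by measurable
  have "integrable lebesgue (\<lambda>z. \<bar>T z\<bar> powr q)"
    by (rule int_bound_real[OF ib mT']) (use bnd in simp)
  then show ?thesis using mT unfolding in_Lp_def by blast
qed

lemma weak_test:
  assumes k: "k > 0" and weak: "weak_Lp_conv (1 + 1 / k) fs f0"
    and T: "T \<in> borel_measurable lebesgue" "integrable lebesgue (\<lambda>z. \<bar>T z\<bar> powr (k + 1))"
  shows "(\<lambda>n. \<integral>z. fs n z * T z \<partial>lebesgue) \<longlonglongrightarrow> (\<integral>z. f0 z * T z \<partial>lebesgue)"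
proof -
  have q: "(1 + 1 / k) / (1 + 1 / k - 1) = k + 1" using k by (simp add: field_simps)
  have "in_Lp ((1 + 1 / k) / (1 + 1 / k - 1)) T" unfolding q in_Lp_def using T by auto
  then show ?thesis using weak unfolding weak_Lp_conv_def by blast
qed

lemma bcs_test:
  assumes k: "k > 0" and weak: "weak_Lp_conv (1 + 1 / k) fs f0" and T: "bcs T"
  shows "(\<lambda>n. \<integral>z. fs n z * T z \<partial>lebesgue) \<longlonglongrightarrow> (\<integral>z. f0 z * T z \<partial>lebesgue)"
proof -
  have "in_Lp (k + 1) T" using bcs_Lp[OF T] k by simp
  then show ?thesis using weak_test[OF k weak] unfolding in_Lp_def by blast
qed

lemma abs_le_powr: "p \<ge> 1 \<Longrightarrow> \<bar>y::real\<bar> \<le> 1 + \<bar>y\<bar> powr p"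
proof (cases "\<bar>y\<bar> \<le> 1")
  case True then show ?thesis by (simp add: add_increasing2)
next
  case False
  assume p: "p \<ge> 1"
  have "\<bar>y\<bar> = \<bar>y\<bar> powr 1" using False by simp
  also have "\<dots> \<le> \<bar>y\<bar> powr p" using False p by (intro powr_mono) auto
  finally show ?thesis by simp
qed

lemma Lp_bcs_integrable:
  assumes "in_Lp p f" "p \<ge> 1" "bcs T"
  shows "integrable lebesgue (\<lambda>z. f z * T z)"
proof -
  obtain C R where C: "C \<ge> 0" "\<And>z. \<bar>T z\<bar> \<le> C * indicator (cball 0 R) z"
    using bcs_bound[OF assms(3)] by blast
  have fm: "f \<in> borel_measurable lebesgue" and fi: "integrable lebesgue (\<lambda>z. \<bar>f z\<bar> powr p)"
    using assms(1) unfolding in_Lp_def by auto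
  have Tm: "T \<in> borel_measurable lebesgue" using assms(3) unfolding bcs_def by blast
  have bnd: "\<bar>f z * T z\<bar> \<le> C * (indicator (cball 0 R) z + \<bar>f z\<bar> powr p)" for z
  proof -
    have "\<bar>f z * T z\<bar> = \<bar>f z\<bar> * \<bar>T z\<bar>" by (simp add: abs_mult)
    also have "\<dots> \<le> (1 + \<bar>f z\<bar> powr p) * (C * indicator (cball 0 R) z)"
      using abs_le_powr[OF assms(2), of "f z"] C(2)[of z] C(1)
      by (intro mult_mono) (auto simp del: indicator_simps)
    also have "\<dots> \<le> C * (indicator (cball 0 R) z + \<bar>f z\<bar> powr p)"
      using C(1) by (cases "z \<in> cball 0 R") (simp_all add: algebra_simps)
    finally show ?thesis .
  qed
  have ib: "integrable lebesgue (\<lambda>z. C * (indicator (cball 0 R) z + \<bar>f z\<bar> powr p))"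
    using fi integrable_cball_ind[of R] by (intro integrable_mult_right Bochner_Integration.integrable_add)
  have mb: "(\<lambda>z. f z * T z) \<in> borel_measurable lebesgue" using fm Tm by measurable
  show ?thesis by (rule int_bound_real[OF ib mb bnd])
qed

locale ctx =
  fixes k M \<beta> \<sigma>0 P0 :: real
    and fs :: "nat \<Rightarrow> phase \<Rightarrow> real" and f0 :: "phase \<Rightarrow> real"
  assumes k: "k > 0" and M: "M > 0" and \<beta>: "0 < \<beta>" "\<beta> < 1/2"
    and \<sigma>0: "0 < \<sigma>0" "\<sigma>0 \<le> 3 * \<beta> ^ 3 / (4 * pi * M\<^sup>2)"
    and P0: "P0 \<ge> 10"
    and adm: "\<And>n. admissible M \<sigma>0 (fs n)"
    and bounds: "\<And>n z. 0 \<le> fs n z \<and> fs n z \<le> 1"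
    and tail: "\<And>n P. P \<ge> P0 + 1 \<Longrightarrow>
       (\<integral>\<^sup>+ z. ennreal (indicator {z. norm (snd z) \<ge> P + 1} z
            * sqrt (1 + (norm (snd z))\<^sup>2) * fs n z) \<partial>lebesgue) \<le> ennreal (2 / P powr (1/4))"
    and weak: "weak_Lp_conv (1 + 1 / k) fs f0"
begin

lemma fs_meas[measurable]: "fs n \<in> borel_measurable lebesgue"
  using adm[of n] unfolding admissible_def by blast

lemma f0_meas[measurable]: "f0 \<in> borel_measurable lebesgue"
  using weak unfolding weak_Lp_conv_def in_Lp_def by blast

lemma f0_Lp: "in_Lp (1 + 1/k) f0"
  using weak unfolding weak_Lp_conv_def by blast

lemma p_ge1: "1 + 1/k \<ge> 1" using k by simp

lemma fs_mass: "(\<integral>\<^sup>+ z. ennreal (sqrt (1 + (norm (snd z))\<^sup>2) * fs n z) \<partial>lebesgue) = ennreal M"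
  using adm[of n] unfolding admissible_def by blast

lemma fs_rho: "rho (fs n) x \<le> ennreal \<sigma>0"
  using adm[of n] unfolding admissible_def by blast

lemma fs_sym: "spherically_symmetric (fs n)"
  using adm[of n] unfolding admissible_def by blast

lemma w_ge1: "1 \<le> sqrt (1 + (norm (v::real^3))\<^sup>2)"
  by (simp add: real_sqrt_ge_one)

lemma cball_sets[measurable]: "cball (0::'a::euclidean_space) r \<in> sets lebesgue"
  using lmeasurable_cball[of 0 r] by (simp add: fmeasurable_def)

lemma sets_leb_Collect: "f \<in> borel_measurable lebesgue \<Longrightarrow> S \<in> sets borel \<Longrightarrow> {z. f z \<in> S} \<in> sets lebesgue"
  using measurable_sets[of f lebesgue borel S] by (simp add: vimage_def)

lemma fs_nn_le: "(\<integral>\<^sup>+ z. ennreal (fs n z) \<partial>lebesgue) \<le> ennreal M"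
proof -
  have "fs n z \<le> sqrt (1 + (norm (snd z))\<^sup>2) * fs n z" for z
    using mult_right_mono[OF w_ge1[of "snd z"], of "fs n z"] bounds[of n z] by simp
  then have "(\<integral>\<^sup>+ z. ennreal (fs n z) \<partial>lebesgue) \<le> (\<integral>\<^sup>+ z. ennreal (sqrt (1 + (norm (snd z))\<^sup>2) * fs n z) \<partial>lebesgue)"
    by (intro nn_integral_mono ennreal_leI) auto
  then show ?thesis using fs_mass by simp
qed

lemma fs_int: "integrable lebesgue (fs n)"
proof -
  have "(\<integral>\<^sup>+ z. ennreal (fs n z) \<partial>lebesgue) < top"
    using fs_nn_le[of n] ennreal_less_top[of M] by (rule le_less_trans)
  then show ?thesis using bounds[of n] by (intro integrableI_nonneg) auto
qed

lemma fs_int_le: "(\<integral>z. fs n z \<partial>lebesgue) \<le> M"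
  using fs_nn_le[of n] bounds[of n] M
  by (subst integral_eq_nn_integral) (auto simp: enn2real_leI)

lemma f0_ae: "AE z in lebesgue. 0 \<le> f0 z \<and> f0 z \<le> 1"
proof -
  have lo: "AE z in lebesgue. z \<in> cball 0 (real R) \<longrightarrow> 0 \<le> f0 z" for R :: nat
  proof -
    define S where "S = {z. f0 z < 0} \<inter> cball 0 (real R)"
    have Sm: "S \<in> sets lebesgue" unfolding S_def
      using sets_leb_Collect[OF f0_meas, of "{..<0}"] by (intro sets.Int cball_sets) auto
    have bT: "bcs (indicator S)"
    proof -
      have "\<forall>z. \<bar>indicator S z :: real\<bar> \<le> 1" by (simp add: indicator_def)
      moreover have "\<forall>z. real R < norm z \<longrightarrow> (indicator S z :: real) = 0" by (auto simp: S_def indicator_def)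
      ultimately show ?thesis unfolding bcs_def using Sm by auto
    qed
    have "(\<lambda>n. \<integral>z. fs n z * indicator S z \<partial>lebesgue) \<longlonglongrightarrow> (\<integral>z. f0 z * indicator S z \<partial>lebesgue)"
      by (rule bcs_test[OF k weak bT])
    moreover have "\<integral>z. fs n z * indicator S z \<partial>lebesgue \<ge> 0" for n
      using bounds[of n] by (intro integral_nonneg_AE) auto
    ultimately have "0 \<le> (\<integral>z. f0 z * indicator S z \<partial>lebesgue)"
      by (intro LIMSEQ_le_const) auto
    moreover have int: "integrable lebesgue (\<lambda>z. f0 z * indicator S z)"
      by (rule Lp_bcs_integrable[OF f0_Lp p_ge1 bT])
    moreover have nonpos: "\<And>z. f0 z * indicator S z \<le> 0"
      by (auto simp: S_def indicator_def)
    ultimately have "(\<integral>z. - (f0 z * indicator S z) \<partial>lebesgue) = 0"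
      using integral_nonneg_AE[where M=lebesgue and f="\<lambda>z. - (f0 z * indicator S z)"] by (simp add: )
    then have "AE z in lebesgue. - (f0 z * indicator S z) = 0"
      using int nonpos by (subst (asm) integral_nonneg_eq_0_iff_AE) auto
    then show ?thesis
      by eventually_elim (auto simp: S_def indicator_def split: if_splits)
  qed
  have hi: "AE z in lebesgue. z \<in> cball 0 (real R) \<longrightarrow> f0 z \<le> 1" for R :: nat
  proof -
    define S where "S = {z. f0 z > 1} \<inter> cball 0 (real R)"
    have Sm: "S \<in> sets lebesgue" unfolding S_def
      using sets_leb_Collect[OF f0_meas, of "{1<..}"] by (intro sets.Int cball_sets) auto
    have bT: "bcs (indicator S)"
    proof -
      have "\<forall>z. \<bar>indicator S z :: real\<bar> \<le> 1" by (simp add: indicator_def)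
      moreover have "\<forall>z. real R < norm z \<longrightarrow> (indicator S z :: real) = 0" by (auto simp: S_def indicator_def)
      ultimately show ?thesis unfolding bcs_def using Sm by auto
    qed
    have intS: "integrable lebesgue (indicator S :: phase \<Rightarrow> real)" by (rule bcs_integrable[OF bT])
    have "(\<lambda>n. \<integral>z. fs n z * indicator S z \<partial>lebesgue) \<longlonglongrightarrow> (\<integral>z. f0 z * indicator S z \<partial>lebesgue)"
      by (rule bcs_test[OF k weak bT])
    moreover have "\<integral>z. fs n z * indicator S z \<partial>lebesgue \<le> (\<integral>z. indicator S z \<partial>lebesgue)" for n
    proof -
      have "bcs (\<lambda>z. fs n z * indicator S z)"
        by (rule bcs_mult[OF bT fs_meas, where B=1]) (use bounds[of n] in auto)
      then have i1: "integrable lebesgue (\<lambda>z. fs n z * indicator S z)" by (rule bcs_integrable)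
      show ?thesis using bounds[of n]
        by (intro integral_mono[OF i1 intS]) (auto simp: indicator_def)
    qed
    ultimately have "(\<integral>z. f0 z * indicator S z \<partial>lebesgue) \<le> (\<integral>z. indicator S z \<partial>lebesgue)"
      by (intro LIMSEQ_le_const2) auto
    moreover have int: "integrable lebesgue (\<lambda>z. f0 z * indicator S z)"
      by (rule Lp_bcs_integrable[OF f0_Lp p_ge1 bT])
    moreover have nonneg: "\<And>z. 0 \<le> (f0 z - 1) * indicator S z"
      by (auto simp: S_def indicator_def)
    ultimately have "(\<integral>z. (f0 z - 1) * indicator S z \<partial>lebesgue) = 0"
      using integral_nonneg_AE[where M=lebesgue and f="\<lambda>z. (f0 z - 1) * indicator S z"] intS
      by (simp add: left_diff_distrib Bochner_Integration.integral_diff)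
    then have "AE z in lebesgue. (f0 z - 1) * indicator S z = 0"
      using int intS nonneg by (subst (asm) integral_nonneg_eq_0_iff_AE) (auto simp: left_diff_distrib)
    then show ?thesis
      by eventually_elim (auto simp: S_def indicator_def split: if_splits)
  qed
  have "AE z in lebesgue. \<forall>R::nat. (z \<in> cball 0 (real R) \<longrightarrow> 0 \<le> f0 z) \<and> (z \<in> cball 0 (real R) \<longrightarrow> f0 z \<le> 1)"
    using lo hi by (simp add: AE_all_countable AE_conj_iff)
  then show ?thesis
  proof eventually_elim
    case (elim z)
    obtain R :: nat where "norm z \<le> real R" using real_arch_simple by blast
    then show ?case using elim[rule_format, of R] by auto
  qed
qed

end

lemma integrable_bounded_mult:
  fixes g h :: "'a \<Rightarrow> real"
  assumes "integrable M g" "h \<in> borel_measurable M" "\<And>z. \<bar>h z\<bar> \<le> B"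
  shows "integrable M (\<lambda>z. h z * g z)"
proof -
  have bnd: "\<bar>h z * g z\<bar> \<le> B * \<bar>g z\<bar>" for z
    using assms(3)[of z] by (simp add: abs_mult mult_right_mono)
  have ib: "integrable M (\<lambda>z. B * \<bar>g z\<bar>)" using assms(1) by (intro integrable_mult_right integrable_abs)
  have mb: "(\<lambda>z. h z * g z) \<in> borel_measurable M" using assms(1,2) by measurable
  show ?thesis by (rule int_bound_real[OF ib mb bnd])
qed

context ctx begin

definition f1 :: "phase \<Rightarrow> real" where "f1 z = max 0 (min 1 (f0 z))"

lemma f1_meas[measurable]: "f1 \<in> borel_measurable lebesgue"
  unfolding f1_def by measurable

lemma f1_bounds: "0 \<le> f1 z" "f1 z \<le> 1"
  unfolding f1_def by auto

lemma f1_ae: "AE z in lebesgue. f1 z = f0 z"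
  using f0_ae by eventually_elim (auto simp: f1_def)

lemma Lk_test:
  assumes "T \<in> borel_measurable lebesgue" "integrable lebesgue T" "\<And>z. \<bar>T z\<bar> \<le> 1"
  shows "(\<lambda>n. \<integral>z. fs n z * T z \<partial>lebesgue) \<longlonglongrightarrow> (\<integral>z. f1 z * T z \<partial>lebesgue)"
proof -
  have "\<bar>T z\<bar> powr (k + 1) \<le> \<bar>T z\<bar>" for z
  proof (cases "T z = 0")
    case False
    then have "\<bar>T z\<bar> powr (k + 1) \<le> \<bar>T z\<bar> powr 1"
      using assms(3)[of z] k by (intro powr_mono') auto
    then show ?thesis using False by simp
  qed simp
  note bnd = this
  have mb: "(\<lambda>z. \<bar>T z\<bar> powr (k + 1)) \<in> borel_measurable lebesgue" using assms(1) by measurable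
  have "integrable lebesgue (\<lambda>z. \<bar>T z\<bar> powr (k + 1))"
    by (rule int_bound_real[OF integrable_abs[OF assms(2)] mb]) (use bnd in simp)
  from weak_test[OF k weak assms(1) this]
  have "(\<lambda>n. \<integral>z. fs n z * T z \<partial>lebesgue) \<longlonglongrightarrow> (\<integral>z. f0 z * T z \<partial>lebesgue)" .
  moreover have "(\<integral>z. f0 z * T z \<partial>lebesgue) = (\<integral>z. f1 z * T z \<partial>lebesgue)"
    using assms(1) f1_ae by (intro integral_cong_AE) auto
  ultimately show ?thesis by simp
qed

lemma bcs_test1:
  assumes "bcs T"
  shows "(\<lambda>n. \<integral>z. fs n z * T z \<partial>lebesgue) \<longlonglongrightarrow> (\<integral>z. f1 z * T z \<partial>lebesgue)"
proof -
  have "(\<integral>z. f0 z * T z \<partial>lebesgue) = (\<integral>z. f1 z * T z \<partial>lebesgue)"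
    using assms f1_ae unfolding bcs_def by (intro integral_cong_AE) auto
  then show ?thesis using bcs_test[OF k weak assms] by simp
qed

lemma f1_nn_le: "(\<integral>\<^sup>+ z. ennreal (f1 z) \<partial>lebesgue) \<le> ennreal M"
proof -
  define T where "T R = (indicator (cball 0 (real R)) :: phase \<Rightarrow> real)" for R :: nat
  have bT: "bcs (T R)" for R
  proof -
    have "\<forall>z. \<bar>T R z\<bar> \<le> 1" by (simp add: T_def indicator_def)
    moreover have "\<forall>z. real R < norm z \<longrightarrow> T R z = 0" by (auto simp: T_def indicator_def)
    moreover have "T R \<in> borel_measurable lebesgue" unfolding T_def
      using cball_sets by (intro borel_measurable_indicator) 
    ultimately show ?thesis unfolding bcs_def by auto
  qed
  have le: "(\<integral>z. f1 z * T R z \<partial>lebesgue) \<le> M" for R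
  proof -
    have "\<integral>z. fs n z * T R z \<partial>lebesgue \<le> M" for n
    proof -
      have "(\<integral>z. fs n z * T R z \<partial>lebesgue) \<le> (\<integral>z. fs n z \<partial>lebesgue)"
        using bounds[of n] fs_int[of n] bcs_integrable[OF bcs_mult[OF bT fs_meas, where B=1]]
        by (intro integral_mono) (auto simp: T_def indicator_def)
      then show ?thesis using fs_int_le[of n] by simp
    qed
    then show ?thesis using bcs_test1[OF bT[of R]] by (intro LIMSEQ_le_const2) auto
  qed
  have nn: "(\<integral>\<^sup>+ z. ennreal (f1 z * T R z) \<partial>lebesgue) \<le> ennreal M" for R
  proof -
    have "integrable lebesgue (\<lambda>z. f1 z * T R z)"
      using bcs_integrable[OF bcs_mult[OF bT[of R] f1_meas, where B=1]] f1_bounds by auto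
    then have "(\<integral>\<^sup>+ z. ennreal (f1 z * T R z) \<partial>lebesgue) = ennreal (\<integral>z. f1 z * T R z \<partial>lebesgue)"
      using f1_bounds by (intro nn_integral_eq_integral) (auto simp: T_def)
    then show ?thesis using le[of R] by (simp add: ennreal_leI)
  qed
  have inc: "incseq (\<lambda>R z. ennreal (f1 z * T R z))"
    by (auto simp: incseq_def le_fun_def T_def indicator_def f1_bounds intro!: ennreal_leI)
  have sup: "(SUP R. ennreal (f1 z * T R z)) = ennreal (f1 z)" for z
  proof (rule antisym)
    show "(SUP R. ennreal (f1 z * T R z)) \<le> ennreal (f1 z)"
      by (intro SUP_least ennreal_leI) (auto simp: T_def indicator_def f1_bounds)
    obtain R :: nat where "norm z \<le> real R" using real_arch_simple by blast
    then have "ennreal (f1 z) = ennreal (f1 z * T R z)" by (simp add: T_def)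
    also have "\<dots> \<le> (SUP R. ennreal (f1 z * T R z))" by (rule SUP_upper) auto
    finally show "ennreal (f1 z) \<le> (SUP R. ennreal (f1 z * T R z))" .
  qed
  have "(\<integral>\<^sup>+ z. ennreal (f1 z) \<partial>lebesgue) = (\<integral>\<^sup>+ z. (SUP R. ennreal (f1 z * T R z)) \<partial>lebesgue)"
    by (simp add: sup)
  also have "\<dots> = (SUP R. \<integral>\<^sup>+ z. ennreal (f1 z * T R z) \<partial>lebesgue)"
    using inc unfolding T_def
    by (intro nn_integral_monotone_convergence_SUP) measurable
  also have "\<dots> \<le> ennreal M" by (intro SUP_least nn)
  finally show ?thesis .
qed

lemma f1_int: "integrable lebesgue f1"
proof -
  have "(\<integral>\<^sup>+ z. ennreal (f1 z) \<partial>lebesgue) < top"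
    using f1_nn_le ennreal_less_top[of M] by (rule le_less_trans)
  then show ?thesis using f1_bounds by (intro integrableI_nonneg) auto
qed

lemma f1_int_le: "(\<integral>z. f1 z \<partial>lebesgue) \<le> M"
  using f1_nn_le f1_bounds M
  by (subst integral_eq_nn_integral) (auto simp: enn2real_leI)

end

context ctx begin

definition e :: "nat \<Rightarrow> phase \<Rightarrow> real" where "e n z = fs n z - f1 z"

lemma e_meas[measurable]: "e n \<in> borel_measurable lebesgue"
  unfolding e_def by measurable

lemma e_abs: "\<bar>e n z\<bar> \<le> 1"
  using bounds[of n z] f1_bounds[of z] unfolding e_def by auto

lemma e_int: "integrable lebesgue (e n)"
  unfolding e_def by (intro Bochner_Integration.integrable_diff fs_int f1_int)

definition ip :: "nat \<Rightarrow> nat \<Rightarrow> real" where "ip a b = (\<integral>z. e a z * e b z \<partial>lebesgue)"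

lemma ip_sym: "ip a b = ip b a"
  unfolding ip_def by (simp add: mult.commute)

lemma prod_int: "integrable lebesgue (\<lambda>z. e a z * e b z)"
  by (rule integrable_bounded_mult[OF e_int e_meas e_abs])

lemma ip_lim: "(\<lambda>n. ip n m) \<longlonglongrightarrow> 0"
proof -
  have i1: "integrable lebesgue (\<lambda>z. fs n z * e m z)" for n
    by (rule integrable_bounded_mult[OF e_int fs_meas, where B=1]) (use bounds in auto)
  have i2: "integrable lebesgue (\<lambda>z. f1 z * e m z)"
    by (rule integrable_bounded_mult[OF e_int f1_meas, where B=1]) (use f1_bounds in auto)
  have eq: "ip n m = (\<integral>z. fs n z * e m z \<partial>lebesgue) - (\<integral>z. f1 z * e m z \<partial>lebesgue)" for n
  proof -
    have "ip n m = (\<integral>z. fs n z * e m z - f1 z * e m z \<partial>lebesgue)"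
      unfolding ip_def by (simp add: e_def[of n] left_diff_distrib)
    also have "\<dots> = (\<integral>z. fs n z * e m z \<partial>lebesgue) - (\<integral>z. f1 z * e m z \<partial>lebesgue)"
      by (rule Bochner_Integration.integral_diff[OF i1 i2])
    finally show ?thesis .
  qed
  have "(\<lambda>n. (\<integral>z. fs n z * e m z \<partial>lebesgue) - (\<integral>z. f1 z * e m z \<partial>lebesgue)) \<longlonglongrightarrow>
        (\<integral>z. f1 z * e m z \<partial>lebesgue) - (\<integral>z. f1 z * e m z \<partial>lebesgue)"
    by (intro tendsto_diff Lk_test e_meas e_int e_abs tendsto_const)
  then show ?thesis unfolding eq by simp
qed

lemma ip_diag: "ip n n \<le> 2 * M"
proof -
  have "e n z * e n z \<le> fs n z + f1 z" for z
  proof -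
    have "e n z * e n z = \<bar>e n z\<bar> * \<bar>e n z\<bar>" by (simp add: abs_mult_self_eq)
    also have "\<dots> \<le> \<bar>e n z\<bar> * 1" by (rule mult_left_mono[OF e_abs abs_ge_zero])
    also have "\<dots> \<le> fs n z + f1 z" using bounds[of n z] f1_bounds[of z] unfolding e_def by auto
    finally show ?thesis .
  qed
  then have "ip n n \<le> (\<integral>z. fs n z + f1 z \<partial>lebesgue)"
    unfolding ip_def
    by (intro integral_mono prod_int Bochner_Integration.integrable_add fs_int f1_int)
  also have "\<dots> = (\<integral>z. fs n z \<partial>lebesgue) + (\<integral>z. f1 z \<partial>lebesgue)"
    by (rule Bochner_Integration.integral_add[OF fs_int f1_int])
  also have "\<dots> \<le> 2 * M" using fs_int_le[of n] f1_int_le by simp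
  finally show ?thesis .
qed

lemma exists_next: "\<exists>n. N < n \<and> (\<forall>m\<le>N. \<bar>ip n m\<bar> \<le> \<epsilon>)" if "\<epsilon> > 0" for N :: nat and \<epsilon> :: real
proof -
  have "\<forall>m\<in>{..N}. eventually (\<lambda>n. \<bar>ip n m\<bar> \<le> \<epsilon>) sequentially"
  proof
    fix m
    have "eventually (\<lambda>n. dist (ip n m) 0 < \<epsilon>) sequentially"
      using tendstoD[OF ip_lim that] .
    then show "eventually (\<lambda>n. \<bar>ip n m\<bar> \<le> \<epsilon>) sequentially"
      by eventually_elim simp
  qed
  then have "eventually (\<lambda>n. \<forall>m\<in>{..N}. \<bar>ip n m\<bar> \<le> \<epsilon>) sequentially"
    by (intro eventually_ball_finite) auto
  moreover have "eventually (\<lambda>n. N < n) sequentially" by (rule eventually_gt_at_top)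
  ultimately have "eventually (\<lambda>n. N < n \<and> (\<forall>m\<le>N. \<bar>ip n m\<bar> \<le> \<epsilon>)) sequentially"
    by eventually_elim auto
  then obtain N0 where "\<forall>n\<ge>N0. N < n \<and> (\<forall>m\<le>N. \<bar>ip n m\<bar> \<le> \<epsilon>)"
    unfolding eventually_sequentially by blast
  then show ?thesis by blast
qed

primrec sg :: "nat \<Rightarrow> nat" where
  "sg 0 = 0"
| "sg (Suc j) = (SOME n. sg j < n \<and> (\<forall>m\<le>sg j. \<bar>ip n m\<bar> \<le> 1 / (real j + 2)))"

lemma sg_step: "sg j < sg (Suc j) \<and> (\<forall>m\<le>sg j. \<bar>ip (sg (Suc j)) m\<bar> \<le> 1 / (real j + 2))"
proof -
  have "\<exists>n. sg j < n \<and> (\<forall>m\<le>sg j. \<bar>ip n m\<bar> \<le> 1 / (real j + 2))"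
    by (rule exists_next) simp
  then show ?thesis unfolding sg.simps by (rule someI_ex)
qed

lemma sg_mono: "strict_mono sg"
  using sg_step by (intro strict_mono_Suc_iff[THEN iffD2]) auto

lemma sg_small: "i < j \<Longrightarrow> \<bar>ip (sg j) (sg i)\<bar> \<le> 1 / (real j + 1)"
proof (cases j)
  case 0
  then show "i < j \<Longrightarrow> ?thesis" by simp
next
  case (Suc j')
  assume "i < j"
  then have "i \<le> j'" using Suc by simp
  then have "sg i \<le> sg j'" using sg_mono by (simp add: strict_mono_less_eq)
  then have "\<bar>ip (sg (Suc j')) (sg i)\<bar> \<le> 1 / (real j' + 2)" using sg_step[of j'] by blast
  then show ?thesis using Suc by (simp add: add.commute)
qed

definition S :: "nat \<Rightarrow> phase \<Rightarrow> real" where "S N z = (\<Sum>j<N. e (sg j) z)"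

lemma S_meas[measurable]: "S N \<in> borel_measurable lebesgue"
  unfolding S_def by measurable

lemma S_abs: "\<bar>S N z\<bar> \<le> real N"
proof -
  have "\<bar>S N z\<bar> \<le> (\<Sum>j<N. \<bar>e (sg j) z\<bar>)" unfolding S_def by (rule sum_abs)
  also have "\<dots> \<le> (\<Sum>j<N. 1)" by (intro sum_mono e_abs)
  finally show ?thesis by simp
qed

lemma S_int: "integrable lebesgue (S N)"
  unfolding S_def by (intro Bochner_Integration.integrable_sum e_int)

lemma SS_int: "integrable lebesgue (\<lambda>z. S N z * S N z)"
  by (rule integrable_bounded_mult[OF S_int S_meas S_abs])

lemma D_bound: "(\<integral>z. S N z * S N z \<partial>lebesgue) \<le> real N * (2 * M + 2)"
proof (induction N)
  case 0
  then show ?case by (simp add: S_def)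
next
  case (Suc N)
  define E where "E = e (sg N)"
  have SS: "S (Suc N) z = S N z + E z" for z unfolding S_def E_def by simp
  have iSE: "integrable lebesgue (\<lambda>z. S N z * E z)"
    unfolding E_def by (rule integrable_bounded_mult[OF e_int S_meas S_abs])
  have iEE: "integrable lebesgue (\<lambda>z. E z * E z)" unfolding E_def by (rule prod_int)
  have "(\<integral>z. S (Suc N) z * S (Suc N) z \<partial>lebesgue)
      = (\<integral>z. S N z * S N z + 2 * (S N z * E z) + E z * E z \<partial>lebesgue)"
    unfolding SS by (simp add: algebra_simps)
  also have "\<dots> = (\<integral>z. S N z * S N z \<partial>lebesgue) + 2 * (\<integral>z. S N z * E z \<partial>lebesgue) + (\<integral>z. E z * E z \<partial>lebesgue)"
    using SS_int[of N] iSE iEE by simp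
  also have "(\<integral>z. S N z * E z \<partial>lebesgue) = (\<Sum>j<N. ip (sg j) (sg N))"
  proof -
    have "(\<integral>z. S N z * E z \<partial>lebesgue) = (\<integral>z. (\<Sum>j<N. e (sg j) z * E z) \<partial>lebesgue)"
      unfolding S_def by (simp add: sum_distrib_right)
    also have "\<dots> = (\<Sum>j<N. \<integral>z. e (sg j) z * E z \<partial>lebesgue)"
      unfolding E_def by (intro Bochner_Integration.integral_sum prod_int)
    finally show ?thesis unfolding ip_def E_def .
  qed
  also have "(\<Sum>j<N. ip (sg j) (sg N)) \<le> 1"
  proof -
    have "(\<Sum>j<N. ip (sg j) (sg N)) \<le> (\<Sum>j<N. 1 / (real N + 1))"
    proof (intro sum_mono)
      fix j assume "j \<in> {..<N}"
      then have "\<bar>ip (sg N) (sg j)\<bar> \<le> 1 / (real N + 1)" by (intro sg_small) simp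
      then show "ip (sg j) (sg N) \<le> 1 / (real N + 1)" by (simp add: ip_sym)
    qed
    also have "\<dots> = real N / (real N + 1)" by simp
    also have "\<dots> \<le> 1" by simp
    finally show ?thesis .
  qed
  also have "(\<integral>z. E z * E z \<partial>lebesgue) \<le> 2 * M" unfolding E_def using ip_diag unfolding ip_def .
  finally show ?case using Suc.IH by (simp add: algebra_simps)
qed

end

lemma avg_bound:
  fixes u :: "nat \<Rightarrow> 'a \<Rightarrow> real" and W :: "'a \<Rightarrow> real"
  assumes um: "\<And>j. u j \<in> borel_measurable M" and Wm: "W \<in> borel_measurable M"
    and u0: "\<And>j z. 0 \<le> u j z" and W0: "\<And>z. 0 \<le> W z"
    and B: "\<And>j. (\<integral>\<^sup>+ z. ennreal (W z * u j z) \<partial>M) \<le> B" and N: "N > 0"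
  shows "(\<integral>\<^sup>+ z. ennreal (W z * ((\<Sum>j<N. u j z) / real N)) \<partial>M) \<le> B"
proof -
  have eq: "ennreal (W z * ((\<Sum>j<N. u j z) / real N)) = (\<Sum>j<N. ennreal (W z * u j z)) * ennreal (1 / real N)" for z
  proof -
    have e1: "W z * ((\<Sum>j<N. u j z) / real N) = (\<Sum>j<N. W z * u j z) * (1 / real N)"
      by (simp add: sum_distrib_left)
    have e2: "ennreal ((\<Sum>j<N. W z * u j z) * (1 / real N)) = ennreal (\<Sum>j<N. W z * u j z) * ennreal (1 / real N)"
      using u0 W0 by (intro ennreal_mult sum_nonneg) auto
    have e3: "(\<Sum>j<N. ennreal (W z * u j z)) = ennreal (\<Sum>j<N. W z * u j z)"
      using u0 W0 by (intro sum_ennreal) auto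
    have "ennreal (W z * ((\<Sum>j<N. u j z) / real N)) = ennreal ((\<Sum>j<N. W z * u j z) * (1 / real N))"
      by (simp only: e1)
    also have "\<dots> = ennreal (\<Sum>j<N. W z * u j z) * ennreal (1 / real N)" by (rule e2)
    also have "\<dots> = (\<Sum>j<N. ennreal (W z * u j z)) * ennreal (1 / real N)" by (simp only: e3)
    finally show ?thesis .
  qed
  have "(\<integral>\<^sup>+ z. ennreal (W z * ((\<Sum>j<N. u j z) / real N)) \<partial>M)
      = (\<integral>\<^sup>+ z. (\<Sum>j<N. ennreal (W z * u j z)) \<partial>M) * ennreal (1 / real N)"
    unfolding eq using um Wm by (intro nn_integral_multc) measurable
  also have "(\<integral>\<^sup>+ z. (\<Sum>j<N. ennreal (W z * u j z)) \<partial>M) = (\<Sum>j<N. \<integral>\<^sup>+ z. ennreal (W z * u j z) \<partial>M)"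
    using um Wm by (intro nn_integral_sum) measurable
  also have "\<dots> \<le> (\<Sum>j<N. B)" by (intro sum_mono B)
  also have "(\<Sum>j<N. B) = of_nat N * B" by simp
  also have "of_nat N * B * ennreal (1 / real N) = B * (ennreal (real N) * ennreal (1 / real N))"
    by (simp add: ennreal_of_nat_eq_real_of_nat mult.commute mult.left_commute)
  also have "ennreal (real N) * ennreal (1 / real N) = 1"
    using N by (simp add: ennreal_mult[symmetric])
  finally show ?thesis by (simp add: mult_right_mono)
qed

lemma fatou_avg:
  fixes u :: "nat \<Rightarrow> 'a \<Rightarrow> real" and W :: "'a \<Rightarrow> real" and N :: "nat \<Rightarrow> nat"
  assumes um: "\<And>j. u j \<in> borel_measurable M" and Wm: "W \<in> borel_measurable M"
    and u0: "\<And>j z. 0 \<le> u j z" and W0: "\<And>z. 0 \<le> W z"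
    and B: "\<And>j. (\<integral>\<^sup>+ z. ennreal (W z * u j z) \<partial>M) \<le> B" and N: "\<And>m. N m > 0"
  defines "avg \<equiv> \<lambda>m z. (\<Sum>j<N m. u j z) / real (N m)"
  shows "(\<integral>\<^sup>+ z. ennreal (W z * (if convergent (\<lambda>m. avg m z) then lim (\<lambda>m. avg m z) else 0)) \<partial>M) \<le> B"
proof -
  let ?G = "\<lambda>z. (if convergent (\<lambda>m. avg m z) then lim (\<lambda>m. avg m z) else 0)"
  have pw: "ennreal (W z * ?G z) \<le> liminf (\<lambda>m. ennreal (W z * avg m z))" for z
  proof (cases "convergent (\<lambda>m. avg m z)")
    case True
    then have "(\<lambda>m. avg m z) \<longlonglongrightarrow> ?G z" using True by (simp add: convergent_LIMSEQ_iff)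
    then have "(\<lambda>m. ennreal (W z * avg m z)) \<longlonglongrightarrow> ennreal (W z * ?G z)"
      by (intro tendsto_ennrealI tendsto_mult tendsto_const)
    then have "liminf (\<lambda>m. ennreal (W z * avg m z)) = ennreal (W z * ?G z)"
      by (intro lim_imp_Liminf) auto
    then show ?thesis by simp
  next
    case False then show ?thesis by simp
  qed
  have "(\<integral>\<^sup>+ z. ennreal (W z * ?G z) \<partial>M) \<le> (\<integral>\<^sup>+ z. liminf (\<lambda>m. ennreal (W z * avg m z)) \<partial>M)"
    by (intro nn_integral_mono pw)
  also have "\<dots> \<le> liminf (\<lambda>m. \<integral>\<^sup>+ z. ennreal (W z * avg m z) \<partial>M)"
  proof (intro nn_integral_liminf)
    fix m
    have "(\<lambda>z. avg m z) \<in> borel_measurable M" unfolding avg_def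
      by (intro borel_measurable_divide borel_measurable_sum um borel_measurable_const)
    then show "(\<lambda>z. ennreal (W z * avg m z)) \<in> borel_measurable M" using Wm by measurable
  qed
  also have "\<dots> \<le> B"
  proof -
    have "(\<integral>\<^sup>+ z. ennreal (W z * avg m z) \<partial>M) \<le> B" for m
      unfolding avg_def by (rule avg_bound[OF um Wm u0 W0 B N])
    then show ?thesis by (auto simp: liminf_SUP_INF intro!: SUP_least INF_lower2)
  qed
  finally show ?thesis .
qed

context ctx begin

definition c :: "nat \<Rightarrow> phase \<Rightarrow> real" where
  "c m z = (\<Sum>j<2^m. fs (sg j) z) / real ((2::nat)^m)"

lemma c_meas[measurable]: "c m \<in> borel_measurable lebesgue"
  unfolding c_def by measurable

lemma c_minus: "c m z - f1 z = S (2^m) z / 2^m"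
proof -
  have "S (2^m) z = (\<Sum>j<2^m. fs (sg j) z) - 2^m * f1 z"
    unfolding S_def e_def by (simp add: sum_subtractf)
  then show ?thesis unfolding c_def by (simp add: field_simps)
qed

lemma c_sq_int: "(\<integral>z. (c m z - f1 z) * (c m z - f1 z) \<partial>lebesgue) \<le> (2 * M + 2) * (1/2)^m"
proof -
  have "(\<integral>z. (c m z - f1 z) * (c m z - f1 z) \<partial>lebesgue) = (\<integral>z. S (2^m) z * S (2^m) z \<partial>lebesgue) / (2^m * 2^m)"
    unfolding c_minus by simp
  also have "\<dots> \<le> (real (2^m) * (2 * M + 2)) / (2^m * 2^m)"
    by (intro divide_right_mono D_bound) simp
  also have "\<dots> = (2 * M + 2) * (1/2)^m" by (simp add: field_simps power_one_over)
  finally show ?thesis .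
qed

lemma c_conv: "AE z in lebesgue. (\<lambda>m. c m z) \<longlonglongrightarrow> f1 z"
proof -
  define a where "a m z = (c m z - f1 z) * (c m z - f1 z)" for m z
  have am[measurable]: "a m \<in> borel_measurable lebesgue" for m unfolding a_def by measurable
  have a0: "0 \<le> a m z" for m z unfolding a_def by simp
  have aint: "integrable lebesgue (a m)" for m
  proof -
    have "integrable lebesgue (\<lambda>z. c m z - f1 z)"
      unfolding c_minus by (intro integrable_divide S_int)
    moreover have "\<bar>c m z - f1 z\<bar> \<le> 1" for z
      using S_abs[of "2^m" z] by (simp add: c_minus abs_divide)
    ultimately show ?thesis unfolding a_def
      by (intro integrable_bounded_mult[where B=1]) simp_all
  qed
  have nn: "(\<integral>\<^sup>+ z. ennreal (a m z) \<partial>lebesgue) \<le> ennreal ((2 * M + 2) * (1/2)^m)" for m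
  proof -
    have "(\<integral>\<^sup>+ z. ennreal (a m z) \<partial>lebesgue) = ennreal (\<integral>z. a m z \<partial>lebesgue)"
      using aint a0 by (intro nn_integral_eq_integral) auto
    then show ?thesis using c_sq_int[of m] unfolding a_def by (simp add: ennreal_leI)
  qed
  have summ: "summable (\<lambda>m. (2 * M + 2) * (1/2::real)^m)"
    by (intro summable_mult summable_geometric) simp
  have "(\<integral>\<^sup>+ z. (\<Sum>m. ennreal (a m z)) \<partial>lebesgue) = (\<Sum>m. \<integral>\<^sup>+ z. ennreal (a m z) \<partial>lebesgue)"
    by (intro nn_integral_suminf) measurable
  also have "\<dots> \<le> (\<Sum>m. ennreal ((2 * M + 2) * (1/2)^m))"
    by (intro suminf_le nn) auto
  also have "\<dots> = ennreal (\<Sum>m. (2 * M + 2) * (1/2)^m)"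
    using summ M by (intro suminf_ennreal2) auto
  finally have "(\<integral>\<^sup>+ z. (\<Sum>m. ennreal (a m z)) \<partial>lebesgue) \<noteq> \<infinity>"
    by (auto simp: top_unique)
  then have "AE z in lebesgue. (\<Sum>m. ennreal (a m z)) \<noteq> \<infinity>"
    by (intro nn_integral_PInf_AE) measurable
  then show ?thesis
  proof eventually_elim
    case (elim z)
    then have "summable (\<lambda>m. a m z)" using a0 by (intro summable_suminf_not_top) auto
    then have "(\<lambda>m. a m z) \<longlonglongrightarrow> 0" by (rule summable_LIMSEQ_zero)
    then have "(\<lambda>m. sqrt (a m z)) \<longlonglongrightarrow> sqrt 0" by (rule tendsto_real_sqrt)
    then have "(\<lambda>m. \<bar>c m z - f1 z\<bar>) \<longlonglongrightarrow> 0" unfolding a_def by (simp add: real_sqrt_abs2)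
    then have "(\<lambda>m. c m z - f1 z) \<longlonglongrightarrow> 0" by (simp add: tendsto_rabs_zero_iff)
    then show ?case by (simp add: LIM_zero_iff)
  qed
qed

end

lemma FC1:
  fixes h :: "'a::euclidean_space \<times> 'b::euclidean_space \<Rightarrow> real"
  assumes h: "h \<in> borel_measurable lebesgue"
  shows "\<exists>h'\<in>borel_measurable (lborel \<Otimes>\<^sub>M lborel). (AE z in lebesgue. h z = h' z) \<and>
           (AE x in lborel. AE v in lborel. h (x, v) = h' (x, v))"
proof -
  obtain h' where h': "h' \<in> borel_measurable lborel" "AE z in lborel. h z = h' z"
    using completion_ex_borel_measurable_real[OF h] by blast
  have m: "h' \<in> borel_measurable (lborel \<Otimes>\<^sub>M lborel)"
    by (subst lborel_prod) (rule h'(1))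
  have "AE z in lborel \<Otimes>\<^sub>M lborel. h z = h' z" by (subst lborel_prod) (rule h'(2))
  then have "AE x in lborel. AE v in lborel. h (x, v) = h' (x, v)"
    by (rule lborel_pair.AE_pair)
  moreover have "AE z in lebesgue. h z = h' z" using h'(2) by (rule AE_completion)
  ultimately show ?thesis using m by blast
qed

lemma FC2:
  fixes h :: "'a::euclidean_space \<times> 'b::euclidean_space \<Rightarrow> real"
  assumes h: "h \<in> borel_measurable lebesgue"
  shows "AE x in lborel. (\<lambda>v. h (x, v)) \<in> borel_measurable lebesgue"
proof -
  obtain h' where m: "h' \<in> borel_measurable (lborel \<Otimes>\<^sub>M lborel)"
    and ae: "AE x in lborel. AE v in lborel. h (x, v) = h' (x, v)"
    using FC1[OF h] by blast
  from ae show ?thesis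
  proof eventually_elim
    case (elim x)
    have "(\<lambda>v. h' (x, v)) \<in> borel_measurable lborel"
      using measurable_Pair2[OF m, of x] by simp
    then have "(\<lambda>v. h' (x, v)) \<in> borel_measurable lebesgue" by (rule measurable_completion)
    moreover have "AE v in lebesgue. h' (x, v) = h (x, v)"
      using elim by (intro AE_completion) (auto elim: eventually_mono)
    ultimately show ?case by (rule borel_measurable_AE)
  qed
qed

lemma TC:
  fixes h :: "'a::euclidean_space \<times> 'b::euclidean_space \<Rightarrow> real"
  assumes h: "h \<in> borel_measurable lebesgue"
  shows "(\<integral>\<^sup>+ z. ennreal (h z) \<partial>lebesgue) = (\<integral>\<^sup>+ x. (\<integral>\<^sup>+ v. ennreal (h (x, v)) \<partial>lebesgue) \<partial>lebesgue)"
proof -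
  obtain h' where m: "h' \<in> borel_measurable (lborel \<Otimes>\<^sub>M lborel)"
    and ae1: "AE z in lebesgue. h z = h' z"
    and ae: "AE x in lborel. AE v in lborel. h (x, v) = h' (x, v)"
    using FC1[OF h] by blast
  have "(\<integral>\<^sup>+ z. ennreal (h z) \<partial>lebesgue) = (\<integral>\<^sup>+ z. ennreal (h' z) \<partial>lebesgue)"
    using ae1 by (intro nn_integral_cong_AE) (auto elim: eventually_mono)
  also have "\<dots> = (\<integral>\<^sup>+ z. ennreal (h' z) \<partial>lborel)" by (rule nn_integral_completion)
  also have "\<dots> = (\<integral>\<^sup>+ z. ennreal (h' z) \<partial>(lborel \<Otimes>\<^sub>M lborel))" by (simp add: lborel_prod)
  also have "\<dots> = (\<integral>\<^sup>+ x. (\<integral>\<^sup>+ v. ennreal (h' (x, v)) \<partial>lborel) \<partial>lborel)"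
  proof (rule lborel.nn_integral_fst[symmetric])
    show "(\<lambda>z. ennreal (h' z)) \<in> borel_measurable (lborel \<Otimes>\<^sub>M lborel)"
      using measurable_compose[OF m measurable_ennreal] by (simp add: o_def)
  qed
  also have "\<dots> = (\<integral>\<^sup>+ x. (\<integral>\<^sup>+ v. ennreal (h (x, v)) \<partial>lborel) \<partial>lborel)"
    using ae by (intro nn_integral_cong_AE) (auto elim!: eventually_mono intro!: nn_integral_cong_AE)
  also have "\<dots> = (\<integral>\<^sup>+ x. (\<integral>\<^sup>+ v. ennreal (h (x, v)) \<partial>lebesgue) \<partial>lebesgue)"
    by (simp add: nn_integral_completion)
  finally show ?thesis .
qed

lemma SO3_transpose: "A \<in> SO3 \<Longrightarrow> transpose A \<in> SO3"
  unfolding SO3_def by simp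

lemma SO3_inv: "A \<in> SO3 \<Longrightarrow> A *v (transpose A *v v) = v" "A \<in> SO3 \<Longrightarrow> transpose A *v (A *v v) = v"
proof -
  assume "A \<in> SO3"
  then have o: "transpose A ** A = mat 1" "A ** transpose A = mat 1" unfolding SO3_def orthogonal_matrix_def by auto
  have "A *v (transpose A *v v) = (A ** transpose A) *v v" by (rule matrix_vector_mul_assoc)
  then show "A *v (transpose A *v v) = v" unfolding o by simp
next
  assume "A \<in> SO3"
  then have o: "transpose A ** A = mat 1" "A ** transpose A = mat 1" unfolding SO3_def orthogonal_matrix_def by auto
  have "transpose A *v (A *v v) = (transpose A ** A) *v v" by (rule matrix_vector_mul_assoc)
  then show "transpose A *v (A *v v) = v" unfolding o by simp
qed

lemma rot_meas:
  fixes h :: "real^3 \<Rightarrow> real"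
  assumes h: "h \<in> borel_measurable lebesgue" and A: "A \<in> SO3"
  shows "(\<lambda>v. h (A *v v)) \<in> borel_measurable lebesgue"
  unfolding borel_measurable_lebesgue_preimage_borel
proof (intro allI impI)
  fix T :: "real set" assume T: "T \<in> sets borel"
  have "{v. h (A *v v) \<in> T} = (\<lambda>u. transpose A *v u) ` {u. h u \<in> T}"
  proof (intro set_eqI iffI)
    fix v assume "v \<in> {v. h (A *v v) \<in> T}"
    then show "v \<in> (\<lambda>u. transpose A *v u) ` {u. h u \<in> T}"
      using SO3_inv(2)[OF A, of v] by (intro image_eqI[of _ _ "A *v v"]) auto
  next
    fix v assume "v \<in> (\<lambda>u. transpose A *v u) ` {u. h u \<in> T}"
    then show "v \<in> {v. h (A *v v) \<in> T}" using SO3_inv(1)[OF A] by auto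
  qed
  moreover have "{u. h u \<in> T} \<in> sets lebesgue"
    using h T unfolding borel_measurable_lebesgue_preimage_borel by auto
  moreover have "(\<lambda>u. transpose A *v u) ` {u. h u \<in> T} \<in> sets lebesgue"
  proof (rule differentiable_image_in_sets_lebesgue)
    show "{u. h u \<in> T} \<in> sets lebesgue" by fact
    show "(\<lambda>u. transpose A *v u) differentiable_on {u. h u \<in> T}"
      by (rule linear_imp_differentiable_on) (rule matrix_vector_mul_linear)
  qed simp
  ultimately show "{v. h (A *v v) \<in> T} \<in> sets lebesgue" by simp
qed

lemma cont_meas: "continuous_on UNIV f \<Longrightarrow> f \<in> borel_measurable (lebesgue :: 'a::euclidean_space measure)"
  using measurable_completion[of f lborel borel] borel_measurable_continuous_onI[of f] by simp

lemma nsnd_meas[measurable]: "(\<lambda>z::phase. norm (snd z)) \<in> borel_measurable lebesgue"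
  by (intro cont_meas continuous_intros)

lemma nfst_meas[measurable]: "(\<lambda>z::phase. norm (fst z)) \<in> borel_measurable lebesgue"
  by (intro cont_meas continuous_intros)

lemma w_meas[measurable]: "(\<lambda>z::phase. sqrt (1 + (norm (snd z))\<^sup>2)) \<in> borel_measurable lebesgue"
  by (intro cont_meas continuous_intros)

lemma w3_meas[measurable]: "(\<lambda>v::real^3. sqrt (1 + (norm v)\<^sup>2)) \<in> borel_measurable lebesgue"
  by (intro cont_meas continuous_intros)

context ctx begin

lemma c_sym: "A \<in> SO3 \<Longrightarrow> c m (A *v x, A *v v) = c m (x, v)"
  using fs_sym unfolding c_def spherically_symmetric_def by simp

lemma c_bounds: "0 \<le> c m z" "c m z \<le> 1"
proof -
  have "(\<Sum>j<2^m. fs (sg j) z) \<le> (\<Sum>j<(2::nat)^m. 1)" using bounds by (intro sum_mono) auto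
  then have "(\<Sum>j<2^m. fs (sg j) z) \<le> real (2^m)" by simp
  then show "c m z \<le> 1" unfolding c_def by simp
  show "0 \<le> c m z" unfolding c_def using bounds by (intro divide_nonneg_nonneg sum_nonneg) auto
qed

definition g0 :: "phase \<Rightarrow> real" where
  "g0 z = (if convergent (\<lambda>m. c m z) then lim (\<lambda>m. c m z) else 0)"

lemma g0_meas[measurable]: "g0 \<in> borel_measurable lebesgue"
proof -
  have Cv: "{z \<in> space lebesgue. Cauchy (\<lambda>m. c m z)} \<in> sets lebesgue" by measurable
  have eq: "g0 = (\<lambda>z. indicator {z \<in> space lebesgue. Cauchy (\<lambda>m. c m z)} z * lim (\<lambda>m. c m z))"
    by (auto simp: g0_def fun_eq_iff Cauchy_convergent_iff indicator_def)
  show ?thesis unfolding eq using Cv by measurable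
qed

lemma g0_bounds: "0 \<le> g0 z" "g0 z \<le> 1"
proof -
  have "0 \<le> g0 z \<and> g0 z \<le> 1"
  proof (cases "convergent (\<lambda>m. c m z)")
    case True
    then have l: "(\<lambda>m. c m z) \<longlonglongrightarrow> g0 z" by (simp add: g0_def convergent_LIMSEQ_iff)
    have "0 \<le> g0 z" using l c_bounds by (intro LIMSEQ_le_const[OF l]) auto
    moreover have "g0 z \<le> 1" using l c_bounds by (intro LIMSEQ_le_const2[OF l]) auto
    ultimately show ?thesis by simp
  qed (simp add: g0_def)
  then show "0 \<le> g0 z" "g0 z \<le> 1" by auto
qed

lemma g0_sym: "A \<in> SO3 \<Longrightarrow> g0 (A *v x, A *v v) = g0 (x, v)"
  unfolding g0_def by (simp add: c_sym)

lemma g0_ae: "AE z in lebesgue. g0 z = f1 z"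
  using c_conv
proof eventually_elim
  case (elim z)
  then have "convergent (\<lambda>m. c m z)" by (auto simp: convergent_def)
  then show ?case using elim by (simp add: g0_def limI)
qed

definition N0 :: "(real^3) set" where
  "N0 = {x. \<exists>n. (\<lambda>v. fs n (x, v)) \<notin> borel_measurable lebesgue}"

lemma N0_null: "\<exists>Z \<in> null_sets lborel. N0 \<subseteq> Z"
proof -
  have "AE x in lborel. \<forall>n. (\<lambda>v. fs n (x, v)) \<in> borel_measurable lebesgue"
    by (simp add: AE_all_countable FC2[OF fs_meas])
  then obtain Z where "{x \<in> space lborel. \<not> (\<forall>n. (\<lambda>v. fs n (x, v)) \<in> borel_measurable lebesgue)} \<subseteq> Z"
     "emeasure lborel Z = 0" "Z \<in> sets lborel"
    by (rule AE_E)
  then show ?thesis unfolding N0_def by (intro bexI[of _ Z]) (auto simp: null_sets_def)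
qed

lemma N0_rot: "A \<in> SO3 \<Longrightarrow> x \<notin> N0 \<Longrightarrow> A *v x \<notin> N0"
proof -
  assume A: "A \<in> SO3" and x: "x \<notin> N0"
  have "(\<lambda>v. fs n (A *v x, v)) \<in> borel_measurable lebesgue" for n
  proof -
    have "(\<lambda>v. fs n (A *v x, v)) = (\<lambda>v. fs n (x, transpose A *v v))"
    proof
      fix v
      have "fs n (A *v x, v) = fs n (A *v x, A *v (transpose A *v v))" by (simp only: SO3_inv(1)[OF A])
      also have "\<dots> = fs n (x, transpose A *v v)"
        using fs_sym[of n] A unfolding spherically_symmetric_def by blast
      finally show "fs n (A *v x, v) = fs n (x, transpose A *v v)" .
    qed
    moreover have "(\<lambda>v. fs n (x, transpose A *v v)) \<in> borel_measurable lebesgue"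
      using x unfolding N0_def by (intro rot_meas[OF _ SO3_transpose[OF A]]) auto
    ultimately show ?thesis by simp
  qed
  then show ?thesis unfolding N0_def by auto
qed

lemma N0_rot_iff: "A \<in> SO3 \<Longrightarrow> A *v x \<in> N0 \<longleftrightarrow> x \<in> N0"
  using N0_rot[of A x] N0_rot[of "transpose A" "A *v x"] SO3_transpose[of A] SO3_inv(2)[of A x] by auto

definition g :: "phase \<Rightarrow> real" where
  "g z = (if fst z \<in> N0 then 0 else g0 z)"

lemma g_ae0: "AE z in lebesgue. g z = g0 z"
proof -
  obtain Z where Z: "Z \<in> null_sets lborel" "N0 \<subseteq> Z" using N0_null by blast
  have "Z \<times> UNIV \<in> null_sets (lborel \<Otimes>\<^sub>M (lborel :: (real^3) measure))"
    using Z(1) by (intro lborel.times_in_null_sets1) auto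
  then have "Z \<times> UNIV \<in> null_sets (lborel :: phase measure)" by (simp add: lborel_prod)
  then have "AE z in lborel. z \<notin> Z \<times> (UNIV :: (real^3) set)" by (rule AE_not_in)
  then have "AE z in lebesgue. z \<notin> Z \<times> (UNIV :: (real^3) set)" by (rule AE_completion)
  then show ?thesis by eventually_elim (use Z(2) in \<open>auto simp: g_def\<close>)
qed

lemma g_meas[measurable]: "g \<in> borel_measurable lebesgue"
  using g_ae0 by (intro borel_measurable_AE[OF g0_meas]) (auto elim: eventually_mono)

lemma g_f0: "AE z in lebesgue. g z = f0 z"
  using g_ae0 g0_ae f1_ae by eventually_elim simp

lemma g_bounds: "0 \<le> g z" "g z \<le> 1"
  using g0_bounds[of z] unfolding g_def by auto

lemma g_sym: "spherically_symmetric g"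
  unfolding spherically_symmetric_def g_def by (simp add: N0_rot_iff g0_sym)

lemma g0_sec: "g0 (x, v) = (if convergent (\<lambda>m. (\<Sum>j<2^m. fs (sg j) (x, v)) / real ((2::nat)^m))
     then lim (\<lambda>m. (\<Sum>j<2^m. fs (sg j) (x, v)) / real ((2::nat)^m)) else 0)"
  by (simp add: g0_def c_def)

lemma g0_fun: "g0 z = (if convergent (\<lambda>m. (\<Sum>j<2^m. fs (sg j) z) / real ((2::nat)^m))
     then lim (\<lambda>m. (\<Sum>j<2^m. fs (sg j) z) / real ((2::nat)^m)) else 0)"
  by (simp add: g0_def c_def)

lemma rho_g: "rho g x \<le> ennreal \<sigma>0"
proof (cases "x \<in> N0")
  case True
  then show ?thesis unfolding rho_def g_def by simp
next
  case False
  have "rho g x = (\<integral>\<^sup>+ v. ennreal (sqrt (1 + (norm v)\<^sup>2) * g0 (x, v)) \<partial>lebesgue)"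
    unfolding rho_def g_def using False by simp
  also have "\<dots> \<le> ennreal \<sigma>0"
    unfolding g0_sec
  proof (rule fatou_avg)
    show "(\<lambda>v. fs (sg j) (x, v)) \<in> borel_measurable lebesgue" for j
      using False unfolding N0_def by auto
    show "(\<lambda>v::real^3. sqrt (1 + (norm v)\<^sup>2)) \<in> borel_measurable lebesgue" by (rule w3_meas)
    show "0 \<le> fs (sg j) (x, v)" for j v using bounds by auto
    show "0 \<le> sqrt (1 + (norm v)\<^sup>2)" for v :: "real^3" by simp
    show "(\<integral>\<^sup>+ v. ennreal (sqrt (1 + (norm v)\<^sup>2) * fs (sg j) (x, v)) \<partial>lebesgue) \<le> ennreal \<sigma>0" for j
      using fs_rho[of "sg j" x] unfolding rho_def .
    show "0 < (2::nat)^m" for m by simp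
  qed
  finally show ?thesis .
qed

lemma tail_g:
  assumes P: "P \<ge> P0 + 1"
  shows "(\<integral>\<^sup>+ z. ennreal (indicator {z. norm (snd z) \<ge> P + 1} z
            * sqrt (1 + (norm (snd z))\<^sup>2) * g z) \<partial>lebesgue) \<le> ennreal (2 / P powr (1/4))"
proof -
  have "(\<integral>\<^sup>+ z. ennreal (indicator {z. norm (snd z) \<ge> P + 1} z * sqrt (1 + (norm (snd z))\<^sup>2) * g z) \<partial>lebesgue)
      = (\<integral>\<^sup>+ z. ennreal (indicator {z. norm (snd z) \<ge> P + 1} z * sqrt (1 + (norm (snd z))\<^sup>2) * g0 z) \<partial>lebesgue)"
    using g_ae0 by (intro nn_integral_cong_AE) (auto elim!: eventually_mono)
  also have "\<dots> \<le> ennreal (2 / P powr (1/4))"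
    unfolding g0_fun
  proof (rule fatou_avg)
    show "fs (sg j) \<in> borel_measurable lebesgue" for j by measurable
    have "{z::phase. norm (snd z) \<ge> P + 1} \<in> sets lebesgue"
      using sets_leb_Collect[OF nsnd_meas, of "{P+1..}"] by simp
    then show "(\<lambda>z::phase. indicator {z. norm (snd z) \<ge> P + 1} z * sqrt (1 + (norm (snd z))\<^sup>2)) \<in> borel_measurable lebesgue"
      by (intro borel_measurable_times borel_measurable_indicator w_meas)
    show "0 \<le> fs (sg j) z" for j z using bounds by auto
    show "0 \<le> indicator {z. norm (snd z) \<ge> P + 1} z * sqrt (1 + (norm (snd z))\<^sup>2)" for z :: phase by simp
    show "(\<integral>\<^sup>+ z. ennreal (indicator {z. norm (snd z) \<ge> P + 1} z * sqrt (1 + (norm (snd z))\<^sup>2) * fs (sg j) z) \<partial>lebesgue)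
          \<le> ennreal (2 / P powr (1/4))" for j
      by (rule tail[OF P])
    show "0 < (2::nat)^m" for m by simp
  qed
  finally show ?thesis .
qed

lemma mass_g: "(\<integral>\<^sup>+ z. ennreal (sqrt (1 + (norm (snd z))\<^sup>2) * g z) \<partial>lebesgue) \<le> ennreal M"
proof -
  have "(\<integral>\<^sup>+ z. ennreal (sqrt (1 + (norm (snd z))\<^sup>2) * g z) \<partial>lebesgue)
      = (\<integral>\<^sup>+ z. ennreal (sqrt (1 + (norm (snd z))\<^sup>2) * g0 z) \<partial>lebesgue)"
    using g_ae0 by (intro nn_integral_cong_AE) (auto elim!: eventually_mono)
  also have "\<dots> \<le> ennreal M"
    unfolding g0_fun
  proof (rule fatou_avg)
    show "fs (sg j) \<in> borel_measurable lebesgue" for j by measurable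
    show "(\<lambda>z::phase. sqrt (1 + (norm (snd z))\<^sup>2)) \<in> borel_measurable lebesgue" by (rule w_meas)
    show "0 \<le> fs (sg j) z" for j z using bounds by auto
    show "0 \<le> sqrt (1 + (norm (snd z))\<^sup>2)" for z :: phase by simp
    show "(\<integral>\<^sup>+ z. ennreal (sqrt (1 + (norm (snd z))\<^sup>2) * fs (sg j) z) \<partial>lebesgue) \<le> ennreal M" for j
      using fs_mass by simp
    show "0 < (2::nat)^m" for m by simp
  qed
  finally show ?thesis .
qed

end

context ctx begin

lemma set_fst_le[measurable]: "{z::phase. norm (fst z) \<le> r} \<in> sets lebesgue"
  using sets_leb_Collect[OF nfst_meas, of "{..r}"] by simp

lemma set_snd_lt[measurable]: "{z::phase. norm (snd z) < Q} \<in> sets lebesgue"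
  using sets_leb_Collect[OF nsnd_meas, of "{..<Q}"] by simp

lemma set_snd_ge[measurable]: "{z::phase. Q \<le> norm (snd z)} \<in> sets lebesgue"
  using sets_leb_Collect[OF nsnd_meas, of "{Q..}"] by simp


definition goodf :: "(phase \<Rightarrow> real) \<Rightarrow> bool" where
  "goodf f \<longleftrightarrow> f \<in> borel_measurable lebesgue \<and> (\<forall>z. 0 \<le> f z \<and> f z \<le> 1) \<and>
     (\<integral>\<^sup>+ z. ennreal (sqrt (1 + (norm (snd z))\<^sup>2) * f z) \<partial>lebesgue) \<le> ennreal M \<and>
     (\<forall>P\<ge>P0 + 1. (\<integral>\<^sup>+ z. ennreal (indicator {z. norm (snd z) \<ge> P + 1} z
            * sqrt (1 + (norm (snd z))\<^sup>2) * f z) \<partial>lebesgue) \<le> ennreal (2 / P powr (1/4)))"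

lemma good_fs: "goodf (fs n)"
  unfolding goodf_def using fs_mass[of n] bounds[of n] tail[of _ n] by auto

lemma good_g: "goodf g"
  unfolding goodf_def using mass_g g_bounds tail_g by auto

lemma mass_int:
  assumes "goodf f"
  shows "integrable lebesgue (\<lambda>z. indicator {z. norm (fst z) \<le> r} z * sqrt (1 + (norm (snd z))\<^sup>2) * f z)"
    and "mass_fn f r = (\<integral>z. indicator {z. norm (fst z) \<le> r} z * sqrt (1 + (norm (snd z))\<^sup>2) * f z \<partial>lebesgue)"
    and "mass_fn f r \<le> M"
proof -
  have fm: "f \<in> borel_measurable lebesgue" and f01: "\<And>z. 0 \<le> f z \<and> f z \<le> 1"
    and fM: "(\<integral>\<^sup>+ z. ennreal (sqrt (1 + (norm (snd z))\<^sup>2) * f z) \<partial>lebesgue) \<le> ennreal M"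
    using assms unfolding goodf_def by auto
  let ?h = "\<lambda>z. indicator {z. norm (fst z) \<le> r} z * sqrt (1 + (norm (snd z))\<^sup>2) * f z"
  have hm: "?h \<in> borel_measurable lebesgue"
    by (intro borel_measurable_times borel_measurable_indicator set_fst_le w_meas fm)
  have h0: "0 \<le> ?h z" for z using f01[of z] by simp
  have le: "(\<integral>\<^sup>+ z. ennreal (?h z) \<partial>lebesgue) \<le> ennreal M"
  proof -
    have "?h z \<le> sqrt (1 + (norm (snd z))\<^sup>2) * f z" for z
      using f01[of z] by (auto simp: indicator_def)
    then have "(\<integral>\<^sup>+ z. ennreal (?h z) \<partial>lebesgue) \<le> (\<integral>\<^sup>+ z. ennreal (sqrt (1 + (norm (snd z))\<^sup>2) * f z) \<partial>lebesgue)"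
      by (intro nn_integral_mono ennreal_leI) auto
    then show ?thesis using fM by (rule order_trans)
  qed
  have fin: "(\<integral>\<^sup>+ z. ennreal (?h z) \<partial>lebesgue) < \<infinity>"
    using le ennreal_less_top[of M] unfolding infinity_ennreal_def by (rule le_less_trans)
  show i: "integrable lebesgue ?h"
    by (rule integrableI_nonneg[OF hm _ fin]) (intro AE_I2 h0)
  have e1: "(\<integral>z. ?h z \<partial>lebesgue) = enn2real (\<integral>\<^sup>+ z. ennreal (?h z) \<partial>lebesgue)"
    by (rule integral_eq_nn_integral[OF hm]) (intro AE_I2 h0)
  have e2: "mass_fn f r = enn2real (\<integral>\<^sup>+ z. ennreal (?h z) \<partial>lebesgue)"
    by (simp only: mass_fn_def)
  show eq: "mass_fn f r = (\<integral>z. ?h z \<partial>lebesgue)" unfolding e1 e2 ..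
  have "(\<integral>\<^sup>+ z. ennreal (?h z) \<partial>lebesgue) = ennreal (\<integral>z. ?h z \<partial>lebesgue)"
    by (rule nn_integral_eq_integral[OF i]) (intro AE_I2 h0)
  then have "ennreal (\<integral>z. ?h z \<partial>lebesgue) \<le> ennreal M" using le by simp
  then have "(\<integral>z. ?h z \<partial>lebesgue) \<le> M" using M by (subst (asm) ennreal_le_iff) auto
  then show "mass_fn f r \<le> M" unfolding eq .
qed

definition TP :: "real \<Rightarrow> real \<Rightarrow> phase \<Rightarrow> real" where
  "TP r P z = indicator {z. norm (fst z) \<le> r} z * indicator {z. norm (snd z) < P + 1} z * sqrt (1 + (norm (snd z))\<^sup>2)"

lemma TP_meas[measurable]: "TP r P \<in> borel_measurable lebesgue"
  unfolding TP_def by (intro borel_measurable_times borel_measurable_indicator set_fst_le set_snd_lt w_meas)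

lemma TP_bcs: assumes "P \<ge> 0" shows "bcs (TP r P)"
proof -
  have "\<bar>TP r P z\<bar> \<le> sqrt (1 + (P + 1)\<^sup>2)" for z
  proof (cases "norm (snd z) < P + 1")
    case True
    then have "(norm (snd z))\<^sup>2 \<le> (P + 1)\<^sup>2" by (intro power_mono) auto
    then show ?thesis using True by (auto simp: TP_def indicator_def)
  qed (auto simp: TP_def indicator_def)
  moreover have "\<forall>z. r + (P + 1) < norm z \<longrightarrow> TP r P z = 0"
  proof (intro allI impI)
    fix z :: phase assume z: "r + (P + 1) < norm z"
    have "norm z \<le> norm (fst z) + norm (snd z)" using norm_Pair_le[of "fst z" "snd z"] by simp
    then show "TP r P z = 0" using z by (auto simp: TP_def indicator_def)
  qed
  ultimately show ?thesis unfolding bcs_def using TP_meas by blast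
qed

lemma mass_split:
  assumes f: "goodf f" and P: "P \<ge> P0 + 1"
  shows "\<bar>mass_fn f r - (\<integral>z. f z * TP r P z \<partial>lebesgue)\<bar> \<le> 2 / P powr (1/4)"
proof -
  have fm: "f \<in> borel_measurable lebesgue" and f01: "\<And>z. 0 \<le> f z \<and> f z \<le> 1"
    and ft: "(\<integral>\<^sup>+ z. ennreal (indicator {z. norm (snd z) \<ge> P + 1} z
            * sqrt (1 + (norm (snd z))\<^sup>2) * f z) \<partial>lebesgue) \<le> ennreal (2 / P powr (1/4))"
    using f P unfolding goodf_def by auto
  have P0': "P \<ge> 0" using P P0 by simp
  let ?h = "\<lambda>z. indicator {z. norm (fst z) \<le> r} z * sqrt (1 + (norm (snd z))\<^sup>2) * f z"
  let ?R = "\<lambda>z. indicator {z. norm (fst z) \<le> r} z * indicator {z. norm (snd z) \<ge> P + 1} z * sqrt (1 + (norm (snd z))\<^sup>2) * f z"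
  have hi: "integrable lebesgue ?h" by (rule mass_int(1)[OF f])
  have Ti: "integrable lebesgue (\<lambda>z. f z * TP r P z)"
    using bcs_integrable[OF bcs_mult[OF TP_bcs[OF P0'] fm, where B=1]] f01 by auto
  have Rm: "?R \<in> borel_measurable lebesgue"
    by (intro borel_measurable_times borel_measurable_indicator set_fst_le set_snd_ge w_meas fm)
  have R0: "0 \<le> ?R z" for z using f01[of z] by simp
  have Rh: "?R z \<le> ?h z" for z using f01[of z] by (auto simp: indicator_def)
  have Ri: "integrable lebesgue ?R"
    by (rule int_bound_real[OF hi Rm]) (use R0 Rh in simp)
  have split: "?h z = f z * TP r P z + ?R z" for z
    by (auto simp: TP_def indicator_def)
  have "mass_fn f r = (\<integral>z. f z * TP r P z + ?R z \<partial>lebesgue)"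
    unfolding mass_int(2)[OF f] split ..
  also have "\<dots> = (\<integral>z. f z * TP r P z \<partial>lebesgue) + (\<integral>z. ?R z \<partial>lebesgue)"
    by (rule Bochner_Integration.integral_add[OF Ti Ri])
  finally have eq: "mass_fn f r - (\<integral>z. f z * TP r P z \<partial>lebesgue) = (\<integral>z. ?R z \<partial>lebesgue)" by simp
  have "(\<integral>\<^sup>+ z. ennreal (?R z) \<partial>lebesgue) \<le> (\<integral>\<^sup>+ z. ennreal (indicator {z. norm (snd z) \<ge> P + 1} z
            * sqrt (1 + (norm (snd z))\<^sup>2) * f z) \<partial>lebesgue)"
    using f01 by (intro nn_integral_mono ennreal_leI) (auto simp: indicator_def)
  also have "\<dots> \<le> ennreal (2 / P powr (1/4))" by (rule ft)
  also have "(\<integral>\<^sup>+ z. ennreal (?R z) \<partial>lebesgue) = ennreal (\<integral>z. ?R z \<partial>lebesgue)"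
    using Ri R0 by (intro nn_integral_eq_integral) auto
  finally have "ennreal (\<integral>z. ?R z \<partial>lebesgue) \<le> ennreal (2 / P powr (1/4))" .
  then have "(\<integral>z. ?R z \<partial>lebesgue) \<le> 2 / P powr (1/4)"
    using P0' by (subst (asm) ennreal_le_iff) auto
  moreover have "0 \<le> (\<integral>z. ?R z \<partial>lebesgue)" using R0 by (intro integral_nonneg_AE) auto
  ultimately show ?thesis unfolding eq by simp
qed

end

context ctx begin

lemma mass_conv:
  assumes r: "r \<ge> 0"
  shows "(\<lambda>n. mass_fn (fs n) r) \<longlonglongrightarrow> mass_fn g r"
proof (rule LIMSEQ_I)
  fix \<epsilon> :: real assume \<epsilon>: "0 < \<epsilon>"
  define a where "a = 6 / \<epsilon>"
  have a: "a > 0" using \<epsilon> by (simp add: a_def)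
  define P where "P = P0 + 1 + a ^ 4"
  have P: "P \<ge> P0 + 1" by (simp add: P_def)
  have P0': "P \<ge> 0" using P P0 by simp
  have "a ^ 4 < P" using P0 by (simp add: P_def)
  then have "(a ^ 4) powr (1/4) < P powr (1/4)"
    using a by (intro powr_less_mono2) auto
  moreover have "(a ^ 4) powr (1/4) = a"
  proof -
    have "(a ^ 4) = a powr (real 4)" using a by (simp add: powr_realpow)
    then have "(a ^ 4) powr (1/4) = a powr (real 4 * (1/4))" by (simp add: powr_powr)
    then show ?thesis using a by simp
  qed
  ultimately have aP: "a < P powr (1/4)" by simp
  have small: "2 / P powr (1/4) < \<epsilon> / 3"
  proof -
    have Pp: "0 < P powr (1/4)" using a aP by linarith
    have "2 / P powr (1/4) < 2 / a" using a aP Pp by (intro divide_strict_left_mono) auto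
    also have "2 / a = \<epsilon> / 3" using \<epsilon> by (simp add: a_def)
    finally show ?thesis .
  qed
  have bT: "bcs (TP r P)" by (rule TP_bcs[OF P0'])
  have lim: "(\<lambda>n. \<integral>z. fs n z * TP r P z \<partial>lebesgue) \<longlonglongrightarrow> (\<integral>z. f1 z * TP r P z \<partial>lebesgue)"
    by (rule bcs_test1[OF bT])
  have gf: "(\<integral>z. g z * TP r P z \<partial>lebesgue) = (\<integral>z. f1 z * TP r P z \<partial>lebesgue)"
  proof (rule integral_cong_AE)
    show "(\<lambda>z. g z * TP r P z) \<in> borel_measurable lebesgue" by measurable
    show "(\<lambda>z. f1 z * TP r P z) \<in> borel_measurable lebesgue" by measurable
    show "AE z in lebesgue. g z * TP r P z = f1 z * TP r P z"
      using g_ae0 g0_ae by eventually_elim simp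
  qed
  have "\<exists>no. \<forall>n\<ge>no. norm ((\<integral>z. fs n z * TP r P z \<partial>lebesgue) - (\<integral>z. f1 z * TP r P z \<partial>lebesgue)) < \<epsilon> / 3"
    using LIMSEQ_D[OF lim, of "\<epsilon> / 3"] \<epsilon> by simp
  then obtain no where no: "\<And>n. n \<ge> no \<Longrightarrow> \<bar>(\<integral>z. fs n z * TP r P z \<partial>lebesgue) - (\<integral>z. f1 z * TP r P z \<partial>lebesgue)\<bar> < \<epsilon> / 3"
    by auto
  show "\<exists>no. \<forall>n\<ge>no. norm (mass_fn (fs n) r - mass_fn g r) < \<epsilon>"
  proof (intro exI allI impI)
    fix n assume n: "n \<ge> no"
    have s1: "\<bar>mass_fn (fs n) r - (\<integral>z. fs n z * TP r P z \<partial>lebesgue)\<bar> \<le> 2 / P powr (1/4)"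
      by (rule mass_split[OF good_fs P])
    have s2: "\<bar>mass_fn g r - (\<integral>z. f1 z * TP r P z \<partial>lebesgue)\<bar> \<le> 2 / P powr (1/4)"
      using mass_split[OF good_g P, of r] unfolding gf .
    show "norm (mass_fn (fs n) r - mass_fn g r) < \<epsilon>"
      unfolding real_norm_def abs_less_iff using s1 s2 no[OF n] small unfolding abs_le_iff abs_less_iff
      by linarith
  qed
qed

lemma mass_g_vol:
  assumes r: "r > 0"
  shows "mass_fn g r \<le> \<sigma>0 * (4 / 3 * pi * r ^ 3)"
proof -
  define h where "h z = indicator {z. norm (fst z) \<le> r} z * sqrt (1 + (norm (snd z))\<^sup>2) * g z" for z :: phase
  have hm: "h \<in> borel_measurable lebesgue" unfolding h_def
    by (intro borel_measurable_times borel_measurable_indicator set_fst_le w_meas g_meas)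
  have inner: "(\<integral>\<^sup>+ v. ennreal (h (x, v)) \<partial>lebesgue) \<le> ennreal \<sigma>0 * indicator (cball 0 r) x" for x :: "real^3"
  proof (cases "norm x \<le> r")
    case True
    then have "(\<integral>\<^sup>+ v. ennreal (h (x, v)) \<partial>lebesgue) = rho g x"
      unfolding h_def rho_def by simp
    then show ?thesis using rho_g[of x] True by simp
  next
    case False
    then show ?thesis unfolding h_def by simp
  qed
  have "(\<integral>\<^sup>+ z. ennreal (h z) \<partial>lebesgue) = (\<integral>\<^sup>+ x. (\<integral>\<^sup>+ v. ennreal (h (x, v)) \<partial>lebesgue) \<partial>lebesgue)"
    by (rule TC[OF hm])
  also have "\<dots> \<le> (\<integral>\<^sup>+ x. ennreal \<sigma>0 * indicator (cball (0::real^3) r) x \<partial>lebesgue)"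
    by (intro nn_integral_mono inner)
  also have "\<dots> = (\<integral>\<^sup>+ x. ennreal \<sigma>0 * indicator (cball (0::real^3) r) x \<partial>lborel)"
    by (rule nn_integral_completion)
  also have "\<dots> = ennreal \<sigma>0 * emeasure lborel (cball (0::real^3) r)"
    by (rule nn_integral_cmult_indicator) simp
  also have "\<dots> = ennreal \<sigma>0 * ennreal (4 / 3 * pi * r ^ 3)"
  proof -
    have "emeasure lborel (cball (0::real^3) r) = ennreal (unit_ball_vol (real DIM(real^3)) * r ^ DIM(real^3))"
      by (rule emeasure_cball) (use r in simp)
    then show ?thesis using r by (simp add: unit_ball_vol_3)
  qed
  also have "\<dots> = ennreal (\<sigma>0 * (4 / 3 * pi * r ^ 3))"
    using \<sigma>0 r by (intro ennreal_mult[symmetric]) auto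
  finally have le: "(\<integral>\<^sup>+ z. ennreal (h z) \<partial>lebesgue) \<le> ennreal (\<sigma>0 * (4 / 3 * pi * r ^ 3))" .
  have "mass_fn g r = enn2real (\<integral>\<^sup>+ z. ennreal (h z) \<partial>lebesgue)"
    unfolding mass_fn_def h_def ..
  also have "\<dots> \<le> \<sigma>0 * (4 / 3 * pi * r ^ 3)"
    using \<sigma>0 r le by (intro enn2real_leI) auto
  finally show ?thesis .
qed

lemma mass_g_beta:
  assumes r: "r > 0"
  shows "mass_fn g r / r \<le> \<beta>"
proof -
  define m where "m = mass_fn g r"
  have mM: "m \<le> M" unfolding m_def by (rule mass_int(3)[OF good_g])
  define a where "a = 4 / 3 * pi * \<sigma>0"
  have ma: "m \<le> a * r ^ 3" using mass_g_vol[OF r] unfolding m_def a_def by (simp add: algebra_simps)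
  have a0: "a \<ge> 0" using \<sigma>0 by (simp add: a_def)
  have aB: "a \<le> \<beta> ^ 3 / M\<^sup>2"
  proof -
    have "a \<le> 4 / 3 * pi * (3 * \<beta> ^ 3 / (4 * pi * M\<^sup>2))"
      unfolding a_def using \<sigma>0 by (intro mult_left_mono) auto
    also have "\<dots> = \<beta> ^ 3 / M\<^sup>2" by (simp add: field_simps)
    finally show ?thesis .
  qed
  show ?thesis
  proof (cases "M \<le> \<beta> * r")
    case True
    have "m / r \<le> M / r" using mM r by (simp add: divide_right_mono)
    also have "\<dots> \<le> \<beta>" using True r by (simp add: divide_le_eq)
    finally show ?thesis unfolding m_def .
  next
    case False
    then have br: "\<beta> * r < M" by simp
    have "m / r \<le> a * r ^ 3 / r" using ma r by (simp add: divide_right_mono)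
    also have "\<dots> = a * r\<^sup>2" using r by (simp add: power3_eq_cube power2_eq_square)
    also have "\<dots> \<le> \<beta> ^ 3 / M\<^sup>2 * r\<^sup>2" using aB by (intro mult_right_mono) auto
    also have "\<dots> = \<beta> * ((\<beta> * r)\<^sup>2 / M\<^sup>2)" by (simp add: power2_eq_square power3_eq_cube)
    also have "\<dots> < \<beta> * 1"
    proof (intro mult_strict_left_mono)
      have "(\<beta> * r)\<^sup>2 < M\<^sup>2" using br \<beta> r by (intro power_strict_mono) auto
      then show "(\<beta> * r)\<^sup>2 / M\<^sup>2 < 1" using M by simp
    qed (use \<beta> in auto)
    finally show ?thesis unfolding m_def by simp
  qed
qed

lemma lambda_conv:
  assumes r: "r \<ge> 0"
  shows "(\<lambda>n. lambda_fn (fs n) r) \<longlonglongrightarrow> lambda_fn g r"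
proof (cases "r = 0")
  case True
  then show ?thesis by (simp add: lambda_fn_def)
next
  case False
  then have r: "r > 0" using r by simp
  have "2 * mass_fn g r / r = 2 * (mass_fn g r / r)" by simp
  also have "\<dots> \<le> 2 * \<beta>" using mass_g_beta[OF r] by simp
  finally have "2 * mass_fn g r / r < 1" using \<beta> by simp
  then have "1 - 2 * mass_fn g r / r \<noteq> 0" by linarith
  then show ?thesis unfolding lambda_fn_def
    by (intro tendsto_divide tendsto_minus tendsto_ln tendsto_diff tendsto_mult tendsto_const mass_conv) (use r in auto)
qed

lemma main:
  "\<exists>g. g \<in> borel_measurable lebesgue \<and> (AE z in lebesgue. g z = f0 z) \<and>
     (\<forall>z. 0 \<le> g z \<and> g z \<le> 1) \<and>
     spherically_symmetric g \<and>
     (\<forall>P\<ge>P0 + 1. (\<integral>\<^sup>+ z. ennreal (indicator {z. norm (snd z) \<ge> P + 1} z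
            * sqrt (1 + (norm (snd z))\<^sup>2) * g z) \<partial>lebesgue) \<le> ennreal (2 / P powr (1/4))) \<and>
     (\<forall>r\<ge>0. (\<lambda>n. mass_fn (fs n) r) \<longlonglongrightarrow> mass_fn g r) \<and>
     (\<forall>r>0. mass_fn g r / r \<le> \<beta>) \<and>
     (\<forall>x. rho g x \<le> ennreal \<sigma>0) \<and>
     (\<forall>r\<ge>0. (\<lambda>n. lambda_fn (fs n) r) \<longlonglongrightarrow> lambda_fn g r)"
  using g_meas g_f0 g_bounds g_sym tail_g mass_conv mass_g_beta rho_g lambda_conv by blast

end

theorem lemma2p1:
  fixes k M \<beta> \<sigma>0 P0 :: real
    and fs :: "nat \<Rightarrow> phase \<Rightarrow> real" and f0 :: "phase \<Rightarrow> real"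
  assumes k: "k > 0" and M: "M > 0" and \<beta>: "0 < \<beta>" "\<beta> < 1/2"
    and \<sigma>0: "0 < \<sigma>0" "\<sigma>0 \<le> min 1 (3 * \<beta> ^ 3 / (4 * pi * M\<^sup>2))"
    and P0: "P0 = max (max 10 (((1 + M) / (4 * pi)) powr (4/3)))
                      (max (64 * (k + 1)\<^sup>2 / (1 - 2 * \<beta>))
                           (256 * (k + 1)\<^sup>2 * M ^ 4 / (1 - 2 * \<beta>)\<^sup>2))"
    and adm: "\<And>n. admissible M \<sigma>0 (fs n)"
    and minimizing: "(\<lambda>n. Dfun k (fs n)) \<longlonglongrightarrow> (INF g \<in> {g. admissible M \<sigma>0 g}. Dfun k g)"
    and bounds: "\<And>n z. 0 \<le> fs n z \<and> fs n z \<le> 1"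
    and tail: "\<And>n P. P \<ge> P0 + 1 \<Longrightarrow>
       (\<integral>\<^sup>+ z. ennreal (indicator {z. norm (snd z) \<ge> P + 1} z
            * sqrt (1 + (norm (snd z))\<^sup>2) * fs n z) \<partial>lebesgue) \<le> ennreal (2 / P powr (1/4))"
    and weak: "weak_Lp_conv (1 + 1 / k) fs f0"
  shows "\<exists>g. g \<in> borel_measurable lebesgue \<and> (AE z in lebesgue. g z = f0 z) \<and>
     (\<forall>z. 0 \<le> g z \<and> g z \<le> 1) \<and>
     spherically_symmetric g \<and>
     (\<forall>P\<ge>P0 + 1. (\<integral>\<^sup>+ z. ennreal (indicator {z. norm (snd z) \<ge> P + 1} z
            * sqrt (1 + (norm (snd z))\<^sup>2) * g z) \<partial>lebesgue) \<le> ennreal (2 / P powr (1/4))) \<and>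
     (\<forall>r\<ge>0. (\<lambda>n. mass_fn (fs n) r) \<longlonglongrightarrow> mass_fn g r) \<and>
     (\<forall>r>0. mass_fn g r / r \<le> \<beta>) \<and>
     (\<forall>x. rho g x \<le> ennreal \<sigma>0) \<and>
     (\<forall>r\<ge>0. (\<lambda>n. lambda_fn (fs n) r) \<longlonglongrightarrow> lambda_fn g r)"
proof -
  interpret ctx k M \<beta> \<sigma>0 P0 fs f0
  proof
    show "k > 0" "M > 0" "0 < \<beta>" "\<beta> < 1/2" "0 < \<sigma>0" by (fact k M \<beta> \<sigma>0(1))+
    show "\<sigma>0 \<le> 3 * \<beta> ^ 3 / (4 * pi * M\<^sup>2)" using \<sigma>0(2) by simp
    show "P0 \<ge> 10" unfolding P0 by simp
    show "admissible M \<sigma>0 (fs n)" for n by (rule adm)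
    show "0 \<le> fs n z \<and> fs n z \<le> 1" for n z by (rule bounds)
    show "P \<ge> P0 + 1 \<Longrightarrow>
       (\<integral>\<^sup>+ z. ennreal (indicator {z. norm (snd z) \<ge> P + 1} z
            * sqrt (1 + (norm (snd z))\<^sup>2) * fs n z) \<partial>lebesgue) \<le> ennreal (2 / P powr (1/4))" for n P
      by (rule tail)
    show "weak_Lp_conv (1 + 1 / k) fs f0" by (rule weak)
  qed
  show ?thesis by (rule main)
qed

end
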